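(* Let $(M,\mathcal T)$ be a closed pseudo 3-manifold which admits a zero-curvature generalized decorated metric. Let $l_0\in\mathbb R^E$ and write $l_0=w+l_0^\top$ with $w\in\mathbb R^V$ and $l_0^\top$ the orthogonal projection of $l_0$ to $\mathbb R^E/\widehat{\mathbb R^V}$. Then the solution $l(t)$ of the extended Ricci flow $\frac{d}{dt}l(t)=\widetilde K(l(t))$ with $l(0)=l_0$ satisfies $l(t)=w+l^\top(t)$ for all $t\in[0,\infty)$, where $l^\top(t)$ is the solution of the extended Ricci flow with initial data $l_0^\top$. Moreover, $l^\top(t)\in\mathbb R^E/\widehat{\mathbb R^V}$ for all $t\in[0,\infty)$.
   Context: Closed pseudo 3-manifold $(M,\mathcal T)$: quotient of a disjoint union $\mathscr T$ of finitely many tetrahedra by affine isomorphisms pairing faces, every 2-face being paired with another; $V,E$ are the sets of vertex and edge classes. For a tetrahedron $\sigma$ with vertices $v_1,\dots,v_4$ and $l\in\mathbb R^E$, $l_\sigma=(l_{ij})\in\mathbb R^6$, $l_{ij}=l(\text{class of } v_iv_j)$. Extended dihedral angles: for $(x_1,x_2,x_3)\in\mathbb R^3_{>0}$, $a_i$ is the Euclidean angle opposite $x_i$ if strict triangle inequalities hold, and $a_i=\pi$, $a_j=a_k=0$ if $x_i\ge x_j+x_k$. For $l\in\mathbb R^6$, $\{i,j,k,h\}=\{1,2,3,4\}$, $\alpha_{ij}(l)$ is the generalized angle opposite the side $e^{(l_{ij}+l_{kh})/2}$ in the generalized triangle with sides $e^{(l_{ij}+l_{kh})/2},e^{(l_{ik}+l_{jh})/2},e^{(l_{ih}+l_{jk})/2}$.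 A generalized decorated metric is any $l\in\mathbb R^E$; its generalized Ricci curvature is $\widetilde K_e(l)=2\pi-\sum\alpha_{ij}(l_\sigma)$ over pairs (tetrahedron $\sigma$, edge $v_iv_j$ of $\sigma$ in class $e$); it is zero-curvature if $\widetilde K(l)=0$. $\mathbb R^V$ acts on $\mathbb R^E$ by $(w+l)_e=l_e+w(e_+)+w(e_-)$ with $e_\pm$ the endpoints of $e$; $\widehat{\mathbb R^V}=\{w+0:w\in\mathbb R^V\}$ and $\mathbb R^E/\widehat{\mathbb R^V}$ denotes its orthogonal complement in $\mathbb R^E$ (standard inner product). *)

theory Defs
  imports "HOL-Analysis.Analysis"
begin

text \<open>Tetrahedra are indexed by elements of a finite set T :: 't set; the vertices of
each tetrahedron are numbered 0,1,2,3.  The face (sigma,i) is the face of sigma opposite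
to vertex i.  A face pairing P assigns to every face (sigma,i) a partner face (tau,j) and a
bijection f from the vertices of face (sigma,i) onto the vertices of face (tau,j)
(this determines the affine isomorphism of the faces).  P sigma i = (tau, j, f).\<close>

type_synonym 't pairing = "'t \<Rightarrow> nat \<Rightarrow> 't \<times> nat \<times> (nat \<Rightarrow> nat)"

definition ptet :: "'t pairing \<Rightarrow> 't \<Rightarrow> nat \<Rightarrow> 't" where
  "ptet P \<sigma> i = fst (P \<sigma> i)"
definition pface :: "'t pairing \<Rightarrow> 't \<Rightarrow> nat \<Rightarrow> nat" where
  "pface P \<sigma> i = fst (snd (P \<sigma> i))"
definition pmap :: "'t pairing \<Rightarrow> 't \<Rightarrow> nat \<Rightarrow> nat \<Rightarrow> nat" where
  "pmap P \<sigma> i = snd (snd (P \<sigma> i))"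

definition closed_pseudo_3_manifold :: "'t set \<Rightarrow> 't pairing \<Rightarrow> bool" where
  "closed_pseudo_3_manifold T P \<longleftrightarrow> finite T \<and>
     (\<forall>\<sigma>\<in>T. \<forall>i<4.
        ptet P \<sigma> i \<in> T \<and> pface P \<sigma> i < 4 \<and>
        (ptet P \<sigma> i, pface P \<sigma> i) \<noteq> (\<sigma>, i) \<and>
        bij_betw (pmap P \<sigma> i) ({..<4} - {i}) ({..<4} - {pface P \<sigma> i}) \<and>
        ptet P (ptet P \<sigma> i) (pface P \<sigma> i) = \<sigma> \<and>
        pface P (ptet P \<sigma> i) (pface P \<sigma> i) = i \<and>
        (\<forall>a\<in>{..<4} - {i}. pmap P (ptet P \<sigma> i) (pface P \<sigma> i) (pmap P \<sigma> i a) = a))"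

definition vgen :: "'t set \<Rightarrow> 't pairing \<Rightarrow> (('t \<times> nat) \<times> ('t \<times> nat)) set" where
  "vgen T P = {((\<sigma>, a), (ptet P \<sigma> i, pmap P \<sigma> i a)) | \<sigma> i a.
                 \<sigma> \<in> T \<and> i < 4 \<and> a < 4 \<and> a \<noteq> i}"

definition vrel :: "'t set \<Rightarrow> 't pairing \<Rightarrow> (('t \<times> nat) \<times> ('t \<times> nat)) set" where
  "vrel T P = (vgen T P \<union> (vgen T P)\<inverse>)\<^sup>*"

definition Verts :: "'t set \<Rightarrow> 't pairing \<Rightarrow> ('t \<times> nat) set set" where
  "Verts T P = (T \<times> {..<4}) // vrel T P"

definition vclass :: "'t set \<Rightarrow> 't pairing \<Rightarrow> 't \<Rightarrow> nat \<Rightarrow> ('t \<times> nat) set" where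
  "vclass T P \<sigma> a = vrel T P `` {(\<sigma>, a)}"

definition tet_edges :: "nat set set" where
  "tet_edges = {s. s \<subseteq> {..<4} \<and> card s = 2}"

definition egen :: "'t set \<Rightarrow> 't pairing \<Rightarrow> (('t \<times> nat set) \<times> ('t \<times> nat set)) set" where
  "egen T P = {((\<sigma>, {a, b}), (ptet P \<sigma> i, {pmap P \<sigma> i a, pmap P \<sigma> i b})) | \<sigma> i a b.
                 \<sigma> \<in> T \<and> i < 4 \<and> a < 4 \<and> b < 4 \<and> a \<noteq> b \<and> a \<noteq> i \<and> b \<noteq> i}"

definition erel :: "'t set \<Rightarrow> 't pairing \<Rightarrow> (('t \<times> nat set) \<times> ('t \<times> nat set)) set" where
  "erel T P = (egen T P \<union> (egen T P)\<inverse>)\<^sup>*"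

definition Edges :: "'t set \<Rightarrow> 't pairing \<Rightarrow> ('t \<times> nat set) set set" where
  "Edges T P = (T \<times> tet_edges) // erel T P"

definition eclass :: "'t set \<Rightarrow> 't pairing \<Rightarrow> 't \<Rightarrow> nat set \<Rightarrow> ('t \<times> nat set) set" where
  "eclass T P \<sigma> s = erel T P `` {(\<sigma>, s)}"

text \<open>Elements of R^E are functions on edge classes (only values on Edges T P matter);
elements of R^V are functions on vertex classes.\<close>
type_synonym 't emetric = "('t \<times> nat set) set \<Rightarrow> real"
type_synonym 't vweight = "('t \<times> nat) set \<Rightarrow> real"

text \<open>The action (w + l)_e = l_e + w(e_+) + w(e_-), computed from a representative
(sigma, {a,b}) of the edge class e (endpoints e_pm are the vertex classes of a and b).\<close>
definition vact :: "'t set \<Rightarrow> 't pairing \<Rightarrow> 't vweight \<Rightarrow> 't emetric \<Rightarrow> 't emetric" where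
  "vact T P w l e = l e +
     (let x = (SOME x. x \<in> e) in \<Sum>a\<in>snd x. w (vclass T P (fst x) a))"

text \<open>Membership in R^E / \<widehat>{R^V}, i.e. the orthogonal complement of
{w + 0 : w in R^V} in R^E for the standard inner product.\<close>
definition in_quot_space :: "'t set \<Rightarrow> 't pairing \<Rightarrow> 't emetric \<Rightarrow> bool" where
  "in_quot_space T P l \<longleftrightarrow>
     (\<forall>w :: 't vweight. (\<Sum>e\<in>Edges T P. l e * vact T P w (\<lambda>_. 0) e) = 0)"

definition ext_angle :: "real \<Rightarrow> real \<Rightarrow> real \<Rightarrow> real" where
  "ext_angle x1 x2 x3 =
     (if x1 \<ge> x2 + x3 then pi
      else if x2 \<ge> x1 + x3 \<or> x3 \<ge> x1 + x2 then 0
      else arccos ((x2\<^sup>2 + x3\<^sup>2 - x1\<^sup>2) / (2 * x2 * x3)))"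

definition gen_dihedral :: "(nat set \<Rightarrow> real) \<Rightarrow> nat set \<Rightarrow> real" where
  "gen_dihedral L s =
     (let i = Min s; j = Max s; c = {..<4} - s; k = Min c; h = Max c in
        ext_angle (exp ((L {i, j} + L {k, h}) / 2))
                  (exp ((L {i, k} + L {j, h}) / 2))
                  (exp ((L {i, h} + L {j, k}) / 2)))"

definition tet_metric :: "'t set \<Rightarrow> 't pairing \<Rightarrow> 't emetric \<Rightarrow> 't \<Rightarrow> nat set \<Rightarrow> real" where
  "tet_metric T P l \<sigma> s = l (eclass T P \<sigma> s)"

definition gen_curv :: "'t set \<Rightarrow> 't pairing \<Rightarrow> 't emetric \<Rightarrow> 't emetric" where
  "gen_curv T P l e = 2 * pi -
     (\<Sum>(\<sigma>, s) \<in> {(\<sigma>, s). \<sigma> \<in> T \<and> s \<in> tet_edges \<and> eclass T P \<sigma> s = e}.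
        gen_dihedral (tet_metric T P l \<sigma>) s)"

definition zero_curvature :: "'t set \<Rightarrow> 't pairing \<Rightarrow> 't emetric \<Rightarrow> bool" where
  "zero_curvature T P l \<longleftrightarrow> (\<forall>e\<in>Edges T P. gen_curv T P l e = 0)"

definition ext_ricci_flow_solution ::
  "'t set \<Rightarrow> 't pairing \<Rightarrow> (real \<Rightarrow> 't emetric) \<Rightarrow> 't emetric \<Rightarrow> bool" where
  "ext_ricci_flow_solution T P l l0 \<longleftrightarrow>
     (\<forall>e\<in>Edges T P. l 0 e = l0 e) \<and>
     (\<forall>e\<in>Edges T P. \<forall>t\<ge>0.
        ((\<lambda>s. l s e) has_real_derivative gen_curv T P (l t) e) (at t within {0..}))"

end

theory Submission imports Defs begin

definition cosv :: "real \<Rightarrow> real \<Rightarrow> real \<Rightarrow> real" where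
  "cosv x1 x2 x3 = (x2^2 + x3^2 - x1^2) / (2 * x2 * x3)"

definition heron :: "real \<Rightarrow> real \<Rightarrow> real \<Rightarrow> real" where
  "heron a b c = 2*(a^2*b^2 + b^2*c^2 + c^2*a^2) - (a^4 + b^4 + c^4)"

lemma heron_fact: "heron a b c = (a+b+c)*(-a+b+c)*(a-b+c)*(a+b-c)"
  unfolding heron_def by algebra

lemma heron_pos:
  assumes "a > 0" "b > 0" "c > 0" "a < b + c" "b < a + c" "c < a + b"
  shows "heron a b c > 0"
  unfolding heron_fact using assms by (intro mult_pos_pos) auto

lemma one_minus_cosv_sq:
  assumes "b > 0" "c > 0"
  shows "1 - (cosv a b c)^2 = heron a b c / (4 * b^2 * c^2)"
  using assms unfolding cosv_def heron_def
  by (simp add: field_simps power2_eq_square) algebra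

lemma sqrt_one_minus_cosv_sq:
  assumes "b > 0" "c > 0"
  shows "sqrt (1 - (cosv a b c)^2) = sqrt (heron a b c) / (2 * b * c)"
proof -
  have "sqrt (4 * b^2 * c^2) = 2 * b * c"
    using assms by (simp add: real_sqrt_mult power2_eq_square real_sqrt_mult_self)
  then show ?thesis using one_minus_cosv_sq[OF assms, of a] by (simp add: real_sqrt_divide)
qed

lemma cosv_bounds:
  assumes "a > 0" "b > 0" "c > 0" "a < b + c" "b < a + c" "c < a + b"
  shows "-1 < cosv a b c" "cosv a b c < 1"
proof -
  have "1 - (cosv a b c)^2 > 0"
    using one_minus_cosv_sq[of b c a] heron_pos[OF assms] assms by simp
  then have "\<bar>cosv a b c\<bar> < 1"
    by (metis abs_square_less_1 diff_gt_0_iff_gt)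
  then show "-1 < cosv a b c" "cosv a b c < 1" by auto
qed

lemma ext_angle_clamp:
  assumes "a > 0" "b > 0" "c > 0"
  shows "ext_angle a b c = arccos (max (-1) (min 1 (cosv a b c)))"
proof (cases "a \<ge> b + c")
  case True
  have "(b+c)^2 \<le> a^2" using True assms by (intro power_mono) auto
  then have "b^2 + c^2 - a^2 \<le> - (2*b*c)" by (simp add: power2_eq_square algebra_simps)
  then have "cosv a b c \<le> -1" using assms unfolding cosv_def by (simp add: divide_le_eq)
  then show ?thesis using True unfolding ext_angle_def by simp
next
  case False
  note F = False
  show ?thesis
  proof (cases "b \<ge> a + c \<or> c \<ge> a + b")
    case True
    have "a^2 \<le> (b - c)^2 \<or> a^2 \<le> (c - b)^2"
      using True assms by (auto intro: power_mono)
    then have "b^2 + c^2 - a^2 \<ge> 2*b*c" by (auto simp: power2_eq_square algebra_simps)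
    then have "cosv a b c \<ge> 1" using assms unfolding cosv_def by (simp add: le_divide_eq)
    then show ?thesis using True F unfolding ext_angle_def by simp
  next
    case False
    then have "-1 < cosv a b c" "cosv a b c < 1" using F assms cosv_bounds[of a b c] by auto
    then show ?thesis using False F unfolding ext_angle_def cosv_def by simp
  qed
qed

lemma angle_sum_nondeg:
  assumes "a > 0" "b > 0" "c > 0" "a < b + c" "b < a + c" "c < a + b"
  shows "arccos (cosv a b c) + arccos (cosv b a c) + arccos (cosv c a b) = pi"
proof -
  define c1 where "c1 = cosv a b c"
  define c2 where "c2 = cosv b a c"
  define c3 where "c3 = cosv c a b"
  have b1: "-1 < c1" "c1 < 1" unfolding c1_def using cosv_bounds assms by auto
  have b2: "-1 < c2" "c2 < 1" unfolding c2_def using cosv_bounds[of b a c] assms by auto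
  have b3: "-1 < c3" "c3 < 1" unfolding c3_def using cosv_bounds[of c a b] assms by auto
  have hs: "heron b a c = heron a b c" "heron c a b = heron a b c"
    unfolding heron_def by algebra+
  have s1: "sin (arccos c1) = sqrt (heron a b c) / (2*b*c)"
    using b1 sin_arccos_abs[of c1] sqrt_one_minus_cosv_sq[of b c a] assms unfolding c1_def by simp
  have s2: "sin (arccos c2) = sqrt (heron a b c) / (2*a*c)"
    using b2 sin_arccos_abs[of c2] sqrt_one_minus_cosv_sq[of a c b] assms hs unfolding c2_def by simp
  have hp: "heron a b c > 0" using heron_pos assms by auto
  have "cos (arccos c1 + arccos c2) = c1*c2 - sqrt (heron a b c) * sqrt (heron a b c) / (4*a*b*c^2)"
    using b1 b2 s1 s2 by (simp add: cos_add power2_eq_square field_simps)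
  also have "\<dots> = c1*c2 - heron a b c / (4*a*b*c^2)" using hp by simp
  also have "\<dots> = - c3"
    unfolding c1_def c2_def c3_def cosv_def heron_def using assms
    by (simp add: field_simps power2_eq_square) algebra
  finally have cs: "cos (arccos c1 + arccos c2) = - c3" .
  have "c1 + c2 > 0"
  proof -
    have "c1 + c2 = (a+b)*(c^2 - (a-b)^2) / (2*a*b*c)"
      unfolding c1_def c2_def cosv_def using assms
      by (simp add: field_simps power2_eq_square)
    moreover have "c^2 - (a-b)^2 > 0"
    proof -
      have "\<bar>a - b\<bar> < c" using assms by auto
      then have "\<bar>a-b\<bar>^2 < c^2" by (intro power_strict_mono) auto
      then show ?thesis by simp
    qed
    ultimately show ?thesis using assms by simp
  qed
  then have "arccos c1 < arccos (- c2)"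
    using b1 b2 by (intro arccos_less_arccos) auto
  then have lt: "arccos c1 + arccos c2 < pi" using arccos_minus[of c2] b2 by simp
  have ge: "0 \<le> arccos c1 + arccos c2" using arccos_lbound b1 b2 by (simp add: add_nonneg_nonneg)
  have "arccos c1 + arccos c2 = arccos (cos (arccos c1 + arccos c2))"
    using lt ge by (simp add: arccos_cos)
  also have "\<dots> = pi - arccos c3" using cs arccos_minus[of c3] b3 by simp
  finally show ?thesis unfolding c1_def c2_def c3_def by simp
qed

lemma angle_sum:
  assumes "a > 0" "b > 0" "c > 0"
  shows "ext_angle a b c + ext_angle b a c + ext_angle c a b = pi"
proof (cases "a < b + c \<and> b < a + c \<and> c < a + b")
  case True
  then show ?thesis using angle_sum_nondeg[OF assms] unfolding ext_angle_def cosv_def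
    by (auto simp: add.commute)
next
  case False
  then show ?thesis using assms unfolding ext_angle_def by (auto simp: add.commute)
qed

lemma N_nonneg:
  fixes A B C d1 d2 d3 :: real
  assumes "B > 0" "(B+C-A)*(A+C-B) + (A+C-B)*(A+B-C) + (A+B-C)*(B+C-A) \<ge> 0"
  shows "(B+C-A)*(d2-d3)^2 + (A+C-B)*(d1-d3)^2 + (A+B-C)*(d1-d2)^2 \<ge> 0"
proof -
  define N where "N = (B+C-A)*(d2-d3)^2 + (A+C-B)*(d1-d3)^2 + (A+B-C)*(d1-d2)^2"
  define Q where "Q = (B+C-A)*(A+C-B) + (A+C-B)*(A+B-C) + (A+B-C)*(B+C-A)"
  have "2*B*N = (2*B*(d2-d3) - (A+B-C)*(d1-d3))^2 + Q*(d1-d3)^2"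
    unfolding N_def Q_def by algebra
  moreover have "Q*(d1-d3)^2 \<ge> 0" using assms unfolding Q_def by simp
  ultimately have "2*B*N \<ge> 0" by (metis add_nonneg_nonneg zero_le_power2)
  then have "N \<ge> 0" using assms by (simp add: zero_le_mult_iff)
  then show ?thesis unfolding N_def .
qed


lemma heron_sym: "heron b a c = heron a b c" "heron c a b = heron a b c" "heron a c b = heron a b c"
  unfolding heron_def by algebra+

lemma exp_convex_ineq:
  fixes t x y :: real
  assumes "0 \<le> t" "t \<le> 1"
  shows "exp ((1 - t) * x + t * y) \<le> (1 - t) * exp x + t * exp y"
  using convex_onD[OF exp_convex, of t x y] assms by simp

lemma deg_interval:
  fixes p q p' q' s1 s2 s :: real
  assumes h1: "exp (p + s1*q) + exp (p' + s1*q') \<le> 1"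
    and h2: "exp (p + s2*q) + exp (p' + s2*q') \<le> 1"
    and "s1 \<le> s" "s \<le> s2"
  shows "exp (p + s*q) + exp (p' + s*q') \<le> 1"
proof (cases "s1 = s2")
  case True then show ?thesis using assms by simp
next
  case False
  then have lt: "s1 < s2" using assms by simp
  define t where "t = (s - s1) / (s2 - s1)"
  have t0: "0 \<le> t" "t \<le> 1" unfolding t_def using assms lt by (auto simp: field_simps)
  have tt: "t * (s2 - s1) = s - s1" unfolding t_def using lt by simp
  have st: "s = (1 - t) * s1 + t * s2" using tt by (simp add: algebra_simps)
  have e1: "p + s*q = (1 - t) * (p + s1*q) + t * (p + s2*q)" unfolding st by (simp add: algebra_simps)
  have e2: "p' + s*q' = (1 - t) * (p' + s1*q') + t * (p' + s2*q')" unfolding st by (simp add: algebra_simps)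
  have "exp (p + s*q) + exp (p' + s*q') \<le>
        ((1 - t) * exp (p + s1*q) + t * exp (p + s2*q)) + ((1 - t) * exp (p' + s1*q') + t * exp (p' + s2*q'))"
    unfolding e1 e2 by (intro add_mono exp_convex_ineq t0)
  also have "\<dots> = (1 - t) * (exp (p + s1*q) + exp (p' + s1*q')) + t * (exp (p + s2*q) + exp (p' + s2*q'))"
    by (simp add: algebra_simps)
  also have "\<dots> \<le> (1 - t) * 1 + t * 1"
    using t0 h1 h2 by (intro add_mono mult_left_mono) auto
  finally show ?thesis by simp
qed

lemma deg_iff:
  fixes a b c :: real
  shows "exp b + exp c \<le> exp a \<longleftrightarrow> exp (b - a) + exp (c - a) \<le> 1"
proof -
  have "exp (b - a) + exp (c - a) = (exp b + exp c) / exp a" by (simp add: exp_diff add_divide_distrib)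
  then show ?thesis by (simp add: divide_le_eq)
qed

lemma deg_interval2:
  fixes va vb vc da db dc sa sb s :: real
  assumes "exp (vb + sa*db) + exp (vc + sa*dc) \<le> exp (va + sa*da)"
    and "exp (vb + sb*db) + exp (vc + sb*dc) \<le> exp (va + sb*da)"
    and "sa \<le> s" "s \<le> sb"
  shows "exp (vb + s*db) + exp (vc + s*dc) \<le> exp (va + s*da)"
proof -
  have eq: "\<And>r. exp (vb + r*db) + exp (vc + r*dc) \<le> exp (va + r*da) \<longleftrightarrow>
     exp ((vb - va) + r*(db - da)) + exp ((vc - va) + r*(dc - da)) \<le> 1"
    unfolding deg_iff by (simp add: algebra_simps)
  show ?thesis using assms deg_interval[of "vb - va" sa "db - da" "vc - va" "dc - da" sb s]
    unfolding eq by blast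
qed

lemma angle_deriv:
  fixes va vb vc da db dc s :: real
  defines "x1 \<equiv> exp (va + s*da)" and "x2 \<equiv> exp (vb + s*db)" and "x3 \<equiv> exp (vc + s*dc)"
  assumes "x1 < x2 + x3" "x2 < x1 + x3" "x3 < x1 + x2"
  shows "((\<lambda>s. arccos (cosv (exp (va + s*da)) (exp (vb + s*db)) (exp (vc + s*dc))))
          has_real_derivative ((2*da - db - dc)*x1^2 - (db - dc)*(x2^2 - x3^2)) / sqrt (heron x1 x2 x3)) (at s)"
proof -
  have p: "x1 > 0" "x2 > 0" "x3 > 0" unfolding x1_def x2_def x3_def by auto
  define C' where "C' = ((2*db*x2^2 + 2*dc*x3^2 - 2*da*x1^2)*(2*x2*x3) - (x2^2+x3^2-x1^2)*(2*(db+dc)*x2*x3)) / (2*x2*x3)^2"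
  have D: "((\<lambda>s. cosv (exp (va + s*da)) (exp (vb + s*db)) (exp (vc + s*dc))) has_real_derivative C') (at s)"
    unfolding cosv_def C'_def x1_def x2_def x3_def
    by (rule derivative_eq_intros refl | simp)+ (simp add: power2_eq_square field_simps exp_add[symmetric])
  have b: "-1 < cosv x1 x2 x3" "cosv x1 x2 x3 < 1" using cosv_bounds[OF p assms(4-6)] by auto
  have A: "DERIV arccos (cosv x1 x2 x3) :> inverse (- sqrt (1 - (cosv x1 x2 x3)\<^sup>2))"
    using DERIV_arccos[OF b] .
  have ch: "((\<lambda>s. arccos (cosv (exp (va + s*da)) (exp (vb + s*db)) (exp (vc + s*dc))))
          has_real_derivative inverse (- sqrt (1 - (cosv x1 x2 x3)\<^sup>2)) * C') (at s)"
    using DERIV_chain2[OF A[unfolded x1_def x2_def x3_def] D] unfolding x1_def x2_def x3_def by simp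
  have hp: "heron x1 x2 x3 > 0" using heron_pos[OF p assms(4-6)] .
  have "inverse (- sqrt (1 - (cosv x1 x2 x3)\<^sup>2)) * C' = ((2*da - db - dc)*x1^2 - (db - dc)*(x2^2 - x3^2)) / sqrt (heron x1 x2 x3)"
    unfolding sqrt_one_minus_cosv_sq[OF p(2,3)] C'_def using p hp
    by (simp add: field_simps power2_eq_square)
  then show ?thesis using ch by simp
qed


lemma sum3_div: "d1*(a/q) + d2*(b/q) + d3*(c/q) = (d1*a + d2*b + d3*c)/(q::real)"
  by (simp add: add_divide_distrib)

definition th :: "real \<Rightarrow> real \<Rightarrow> real \<Rightarrow> real" where
  "th a b c = ext_angle (exp a) (exp b) (exp c)"

lemma vals1:
  assumes "x1 > 0" "x2 > 0" "x3 > 0" "x2 + x3 \<le> x1"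
  shows "ext_angle x1 x2 x3 = pi" "ext_angle x2 x1 x3 = 0" "ext_angle x3 x1 x2 = 0"
  using assms unfolding ext_angle_def by auto

lemma vals2:
  assumes "x1 > 0" "x2 > 0" "x3 > 0" "x1 + x3 \<le> x2"
  shows "ext_angle x1 x2 x3 = 0" "ext_angle x2 x1 x3 = pi" "ext_angle x3 x1 x2 = 0"
  using assms unfolding ext_angle_def by auto

lemma vals3:
  assumes "x1 > 0" "x2 > 0" "x3 > 0" "x1 + x2 \<le> x3"
  shows "ext_angle x1 x2 x3 = 0" "ext_angle x2 x1 x3 = 0" "ext_angle x3 x1 x2 = pi"
  using assms unfolding ext_angle_def by auto

lemma vals_nd:
  assumes "x1 < x2 + x3" "x2 < x1 + x3" "x3 < x1 + x2"
  shows "ext_angle x1 x2 x3 = arccos (cosv x1 x2 x3)" "ext_angle x2 x1 x3 = arccos (cosv x2 x1 x3)"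
    "ext_angle x3 x1 x2 = arccos (cosv x3 x1 x2)"
  using assms unfolding ext_angle_def cosv_def by (auto simp: add.commute)

lemma interval_interior:
  fixes E :: "real set"
  assumes "E \<subseteq> {0..1}" "s \<in> E" "s \<noteq> Inf E" "s \<noteq> Sup E"
    and iv: "\<And>a b x. a \<in> E \<Longrightarrow> b \<in> E \<Longrightarrow> a \<le> x \<Longrightarrow> x \<le> b \<Longrightarrow> x \<in> E"
  shows "\<exists>a b. a < s \<and> s < b \<and> {a<..<b} \<subseteq> E"
proof -
  have ne: "E \<noteq> {}" using assms by auto
  have bb: "bdd_below E" "bdd_above E"
    by (rule bdd_belowI[of _ 0], use assms(1) in auto) (rule bdd_aboveI[of _ 1], use assms(1) in auto)
  have "Inf E \<le> s" using cInf_lower[OF assms(2) bb(1)] .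
  then have "Inf E < s" using assms(3) by simp
  then obtain a where a: "a \<in> E" "a < s" using cInf_less_iff[OF ne bb(1)] by auto
  have "s \<le> Sup E" using cSup_upper[OF assms(2) bb(2)] .
  then have "s < Sup E" using assms(4) by simp
  then obtain b where b: "b \<in> E" "s < b" using less_cSup_iff[OF ne bb(2)] by auto
  have "{a<..<b} \<subseteq> E" using iv[OF a(1) b(1)] by auto
  then show ?thesis using a b by blast
qed

lemma cont_angle:
  "continuous_on UNIV (\<lambda>s::real. arccos (max (-1) (min 1 (cosv (exp (a+s*b)) (exp (c+s*d)) (exp (e+s*f))))))"
  unfolding cosv_def by (intro continuous_intros) auto

lemma tri_mono:
  fixes u1 u2 u3 v1 v2 v3 :: real
  shows "(th u1 u2 u3 - th v1 v2 v3)*(u1-v1) + (th u2 u1 u3 - th v2 v1 v3)*(u2-v2)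
           + (th u3 u1 u2 - th v3 v1 v2)*(u3-v3) \<ge> 0"
proof -
  define d1 where "d1 = u1 - v1"
  define d2 where "d2 = u2 - v2"
  define d3 where "d3 = u3 - v3"
  define X1 where "X1 = (\<lambda>s. exp (v1 + s*d1))"
  define X2 where "X2 = (\<lambda>s. exp (v2 + s*d2))"
  define X3 where "X3 = (\<lambda>s. exp (v3 + s*d3))"
  have Xp: "\<And>s. X1 s > 0" "\<And>s. X2 s > 0" "\<And>s. X3 s > 0" unfolding X1_def X2_def X3_def by auto
  define g where "g = (\<lambda>s. d1 * ext_angle (X1 s) (X2 s) (X3 s) + d2 * ext_angle (X2 s) (X1 s) (X3 s)
                          + d3 * ext_angle (X3 s) (X1 s) (X2 s))"
  define nd where "nd = (\<lambda>s. X1 s < X2 s + X3 s \<and> X2 s < X1 s + X3 s \<and> X3 s < X1 s + X2 s)"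
  define NN where "NN = (\<lambda>s. d1*((2*d1-d2-d3)*(X1 s)^2 - (d2-d3)*((X2 s)^2 - (X3 s)^2))
      + d2*((2*d2-d1-d3)*(X2 s)^2 - (d1-d3)*((X1 s)^2 - (X3 s)^2))
      + d3*((2*d3-d1-d2)*(X3 s)^2 - (d1-d2)*((X1 s)^2 - (X2 s)^2)))"
  define g' where "g' = (\<lambda>s. if nd s then NN s / sqrt (heron (X1 s) (X2 s) (X3 s)) else 0)"
  define E1 where "E1 = {s\<in>{0..1}. X2 s + X3 s \<le> X1 s}"
  define E2 where "E2 = {s\<in>{0..1}. X1 s + X3 s \<le> X2 s}"
  define E3 where "E3 = {s\<in>{0..1}. X1 s + X2 s \<le> X3 s}"
  define S where "S = {Inf E1, Sup E1, Inf E2, Sup E2, Inf E3, Sup E3}"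
  have iv1: "x \<in> E1" if "a \<in> E1" "b \<in> E1" "a \<le> x" "x \<le> b" for a b x
    using that deg_interval2[where va=v1 and vb=v2 and vc=v3 and da=d1 and db=d2 and dc=d3 and sa=a and sb=b and s=x]
    unfolding E1_def X1_def X2_def X3_def by auto
  have iv2: "x \<in> E2" if "a \<in> E2" "b \<in> E2" "a \<le> x" "x \<le> b" for a b x
    using that deg_interval2[where va=v2 and vb=v1 and vc=v3 and da=d2 and db=d1 and dc=d3 and sa=a and sb=b and s=x]
    unfolding E2_def X1_def X2_def X3_def by auto
  have iv3: "x \<in> E3" if "a \<in> E3" "b \<in> E3" "a \<le> x" "x \<le> b" for a b x
    using that deg_interval2[where va=v3 and vb=v1 and vc=v2 and da=d3 and db=d1 and dc=d2 and sa=a and sb=b and s=x]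
    unfolding E3_def X1_def X2_def X3_def by auto
  have g'_nonneg: "g' s \<ge> 0" for s
  proof (cases "nd s")
    case True
    have hp: "heron (X1 s) (X2 s) (X3 s) > 0" using heron_pos[OF Xp(1,2,3)] True unfolding nd_def by auto
    have "NN s = ((X2 s)^2 + (X3 s)^2 - (X1 s)^2)*(d2-d3)^2 + ((X1 s)^2 + (X3 s)^2 - (X2 s)^2)*(d1-d3)^2
                 + ((X1 s)^2 + (X2 s)^2 - (X3 s)^2)*(d1-d2)^2"
      unfolding NN_def by algebra
    moreover have "((X2 s)^2 + (X3 s)^2 - (X1 s)^2)*(d2-d3)^2 + ((X1 s)^2 + (X3 s)^2 - (X2 s)^2)*(d1-d3)^2
                 + ((X1 s)^2 + (X2 s)^2 - (X3 s)^2)*(d1-d2)^2 \<ge> 0"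
    proof (rule N_nonneg)
      show "(X2 s)^2 > 0" using Xp(2)[of s] by simp
      have "((X2 s)^2 + (X3 s)^2 - (X1 s)^2) * ((X1 s)^2 + (X3 s)^2 - (X2 s)^2) +
          ((X1 s)^2 + (X3 s)^2 - (X2 s)^2) * ((X1 s)^2 + (X2 s)^2 - (X3 s)^2) +
          ((X1 s)^2 + (X2 s)^2 - (X3 s)^2) * ((X2 s)^2 + (X3 s)^2 - (X1 s)^2) = heron (X1 s) (X2 s) (X3 s)"
        unfolding heron_def by algebra
      then show "0 \<le> ((X2 s)^2 + (X3 s)^2 - (X1 s)^2) * ((X1 s)^2 + (X3 s)^2 - (X2 s)^2) +
          ((X1 s)^2 + (X3 s)^2 - (X2 s)^2) * ((X1 s)^2 + (X2 s)^2 - (X3 s)^2) +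
          ((X1 s)^2 + (X2 s)^2 - (X3 s)^2) * ((X2 s)^2 + (X3 s)^2 - (X1 s)^2)" using hp by simp
    qed
    ultimately have "NN s \<ge> 0" by simp
    then show ?thesis unfolding g'_def using True hp by simp
  next
    case False then show ?thesis unfolding g'_def by simp
  qed
  have cont: "continuous_on {0..1} g"
  proof -
    have "g = (\<lambda>s. d1 * arccos (max (-1) (min 1 (cosv (exp (v1+s*d1)) (exp (v2+s*d2)) (exp (v3+s*d3)))))
         + d2 * arccos (max (-1) (min 1 (cosv (exp (v2+s*d2)) (exp (v1+s*d1)) (exp (v3+s*d3)))))
         + d3 * arccos (max (-1) (min 1 (cosv (exp (v3+s*d3)) (exp (v1+s*d1)) (exp (v2+s*d2))))))"
      unfolding g_def X1_def X2_def X3_def by (intro ext) (simp add: ext_angle_clamp)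
    moreover have "continuous_on UNIV \<dots>"
      by (intro continuous_intros cont_angle)
    ultimately show ?thesis by (metis continuous_on_subset subset_UNIV)
  qed
  have deriv: "(g has_real_derivative g' x) (at x)" if x: "x \<in> {0<..<1} - S" for x
  proof (cases "nd x")
    case True
    define G where "G = (\<lambda>s. d1 * arccos (cosv (exp (v1+s*d1)) (exp (v2+s*d2)) (exp (v3+s*d3)))
         + d2 * arccos (cosv (exp (v2+s*d2)) (exp (v1+s*d1)) (exp (v3+s*d3)))
         + d3 * arccos (cosv (exp (v3+s*d3)) (exp (v1+s*d1)) (exp (v2+s*d2))))"
    have op: "open {s. nd s}"
      unfolding nd_def X1_def X2_def X3_def Collect_conj_eq
      by (intro open_Int open_Collect_less continuous_intros)
    have eqG: "G s = g s" if "s \<in> {s. nd s}" for s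
      using that vals_nd[of "X1 s" "X2 s" "X3 s"] unfolding G_def g_def nd_def X1_def X2_def X3_def by simp
    have t: "X1 x < X2 x + X3 x" "X2 x < X1 x + X3 x" "X3 x < X1 x + X2 x" using True nd_def by auto
    note D1 = angle_deriv[where va=v1 and vb=v2 and vc=v3 and da=d1 and db=d2 and dc=d3 and s=x]
    note D2 = angle_deriv[where va=v2 and vb=v1 and vc=v3 and da=d2 and db=d1 and dc=d3 and s=x]
    note D3 = angle_deriv[where va=v3 and vb=v1 and vc=v2 and da=d3 and db=d1 and dc=d2 and s=x]
    have tt: "exp (v1+x*d1) < exp (v2+x*d2) + exp (v3+x*d3)" "exp (v2+x*d2) < exp (v1+x*d1) + exp (v3+x*d3)"
      "exp (v3+x*d3) < exp (v1+x*d1) + exp (v2+x*d2)" using t unfolding X1_def X2_def X3_def by auto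
    have DG: "(G has_real_derivative
        d1 * (((2*d1 - d2 - d3)*(X1 x)^2 - (d2 - d3)*((X2 x)^2 - (X3 x)^2)) / sqrt (heron (X1 x) (X2 x) (X3 x)))
      + d2 * (((2*d2 - d1 - d3)*(X2 x)^2 - (d1 - d3)*((X1 x)^2 - (X3 x)^2)) / sqrt (heron (X2 x) (X1 x) (X3 x)))
      + d3 * (((2*d3 - d1 - d2)*(X3 x)^2 - (d1 - d2)*((X1 x)^2 - (X2 x)^2)) / sqrt (heron (X3 x) (X1 x) (X2 x)))) (at x)"
      unfolding G_def X1_def X2_def X3_def
      by (intro DERIV_add DERIV_cmult D1 D2 D3) (use tt in auto)
    have hp: "heron (X1 x) (X2 x) (X3 x) > 0" using heron_pos[OF Xp(1,2,3) t] .
    have val: "d1 * (((2*d1 - d2 - d3)*(X1 x)^2 - (d2 - d3)*((X2 x)^2 - (X3 x)^2)) / sqrt (heron (X1 x) (X2 x) (X3 x)))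
      + d2 * (((2*d2 - d1 - d3)*(X2 x)^2 - (d1 - d3)*((X1 x)^2 - (X3 x)^2)) / sqrt (heron (X2 x) (X1 x) (X3 x)))
      + d3 * (((2*d3 - d1 - d2)*(X3 x)^2 - (d1 - d2)*((X1 x)^2 - (X2 x)^2)) / sqrt (heron (X3 x) (X1 x) (X2 x)))
      = g' x"
    proof -
      have "g' x = NN x / sqrt (heron (X1 x) (X2 x) (X3 x))" using True unfolding g'_def by simp
      moreover have "heron (X2 x) (X1 x) (X3 x) = heron (X1 x) (X2 x) (X3 x)"
        "heron (X3 x) (X1 x) (X2 x) = heron (X1 x) (X2 x) (X3 x)" by (rule heron_sym)+
      ultimately show ?thesis by (simp only: sum3_div NN_def)
    qed
    show ?thesis
      using has_field_derivative_transform_within_open[OF DG op _ eqG] True val by simp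
  next
    case False
    then have "x \<in> E1 \<or> x \<in> E2 \<or> x \<in> E3" using x unfolding nd_def E1_def E2_def E3_def by auto
    moreover have "x \<noteq> Inf E1" "x \<noteq> Sup E1" "x \<noteq> Inf E2" "x \<noteq> Sup E2" "x \<noteq> Inf E3" "x \<noteq> Sup E3"
      using x unfolding S_def by auto
    moreover have sub: "E1 \<subseteq> {0..1}" "E2 \<subseteq> {0..1}" "E3 \<subseteq> {0..1}" unfolding E1_def E2_def E3_def by auto
    ultimately obtain a b c where ab: "a < x" "x < b" and
      cs: "\<And>s. s \<in> {a<..<b} \<Longrightarrow> g s = c"
    proof (elim disjE)
      assume "x \<in> E1"
      then have "\<exists>a b. a < x \<and> x < b \<and> {a<..<b} \<subseteq> E1"
        by (rule interval_interior[OF sub(1) _ \<open>x \<noteq> Inf E1\<close> \<open>x \<noteq> Sup E1\<close>]) (rule iv1; assumption)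
      then obtain a b where "a < x" "x < b" "{a<..<b} \<subseteq> E1" by blast
      moreover have "g s = d1 * pi" if "s \<in> E1" for s
        using that vals1[OF Xp(1,2,3), of s] unfolding g_def E1_def by simp
      ultimately show ?thesis using that by blast
    next
      assume "x \<in> E2"
      then have "\<exists>a b. a < x \<and> x < b \<and> {a<..<b} \<subseteq> E2"
        by (rule interval_interior[OF sub(2) _ \<open>x \<noteq> Inf E2\<close> \<open>x \<noteq> Sup E2\<close>]) (rule iv2; assumption)
      then obtain a b where "a < x" "x < b" "{a<..<b} \<subseteq> E2" by blast
      moreover have "g s = d2 * pi" if "s \<in> E2" for s
        using that vals2[OF Xp(1,2,3), of s] unfolding g_def E2_def by simp
      ultimately show ?thesis using that by blast
    next
      assume "x \<in> E3"
      then have "\<exists>a b. a < x \<and> x < b \<and> {a<..<b} \<subseteq> E3"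
        by (rule interval_interior[OF sub(3) _ \<open>x \<noteq> Inf E3\<close> \<open>x \<noteq> Sup E3\<close>]) (rule iv3; assumption)
      then obtain a b where "a < x" "x < b" "{a<..<b} \<subseteq> E3" by blast
      moreover have "g s = d3 * pi" if "s \<in> E3" for s
        using that vals3[OF Xp(1,2,3), of s] unfolding g_def E3_def by simp
      ultimately show ?thesis using that by blast
    qed
    have "((\<lambda>_. c) has_real_derivative 0) (at x)" by simp
    from has_field_derivative_transform_within_open[OF this open_greaterThanLessThan[of a b] _ cs[symmetric]]
    show ?thesis using ab False unfolding g'_def by simp
  qed
  have "(g' has_integral (g 1 - g 0)) {0..1}"
  proof (rule fundamental_theorem_of_calculus_interior_strong[where S=S])
    show "finite S" unfolding S_def by simp
    show "continuous_on {0..1} g" by (rule cont)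
    show "(g has_vector_derivative g' x) (at x)" if "x \<in> {0<..<1} - S" for x
      using deriv[OF that] by (simp add: has_real_derivative_iff_has_vector_derivative)
  qed simp
  then have "0 \<le> g 1 - g 0" by (rule has_integral_nonneg) (use g'_nonneg in auto)
  moreover have "g 1 - g 0 = (th u1 u2 u3 - th v1 v2 v3)*(u1-v1) + (th u2 u1 u3 - th v2 v1 v3)*(u2-v2)
           + (th u3 u1 u2 - th v3 v1 v2)*(u3-v3)"
    unfolding g_def th_def X1_def X2_def X3_def d1_def d2_def d3_def by (simp add: algebra_simps)
  ultimately show ?thesis by simp
qed


lemma lessThan4: "{..<4::nat} = {0,1,2,3}" by auto
lemma pairs4: "x < (y::nat) \<Longrightarrow> y < 4 \<Longrightarrow> (x = 0 \<and> y = 1) \<or> (x = 0 \<and> y = 2) \<or> (x = 0 \<and> y = 3) \<or>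
       (x = 1 \<and> y = 2) \<or> (x = 1 \<and> y = 3) \<or> (x = 2 \<and> y = 3)"
proof -
  assume a: "x < y" "y < 4"
  then have "x \<in> {..<4}" "y \<in> {..<4}" by auto
  then have "x \<in> {0,1,2,3}" "y \<in> {0,1,2,3}" unfolding lessThan4 .
  then show ?thesis using a by auto
qed

lemma tet_edges_explicit:
  "tet_edges = {{0,1},{0,2},{0,3},{1,2},{1,3},{2,3}}"
proof -
  have A: "s \<in> {{0,1},{0,2},{0,3},{1,2},{1,3},{2,3}}" if h: "s \<subseteq> {..<4}" "card s = 2" for s :: "nat set"
  proof -
    obtain a b where ab: "s = {a, b}" "a \<noteq> b" using h(2) card_2_iff by metis
    have "a < 4" "b < 4" using h(1) ab by auto
    have w: "s = {min a b, max a b}" using ab by (auto simp: min_def max_def)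
    have "min a b < max a b" "max a b < 4" using ab \<open>a < 4\<close> \<open>b < 4\<close> by auto
    from pairs4[OF this] show ?thesis unfolding w by (elim disjE) simp_all
  qed
  have B: "x \<in> tet_edges" if "x \<in> {{0,1},{0,2},{0,3},{1,2},{1,3},{2,3}}" for x :: "nat set"
    using that unfolding tet_edges_def by auto
  show ?thesis
  proof (intro set_eqI iffI)
    fix x :: "nat set" assume "x \<in> tet_edges" then show "x \<in> {{0,1},{0,2},{0,3},{1,2},{1,3},{2,3}}"
      using A unfolding tet_edges_def by simp
  next
    fix x :: "nat set" assume "x \<in> {{0,1},{0,2},{0,3},{1,2},{1,3},{2,3}}" then show "x \<in> tet_edges" by (rule B)
  qed
qed

lemma sum_tet_edges:
  "(\<Sum>s\<in>tet_edges. f s) = f {0,1} + f {0,2} + f {0,3} + f {1,2} + f {1,3} + (f {2,3} :: real)"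
  unfolding tet_edges_explicit by (simp add: doubleton_eq_iff)
definition U1 :: "(nat set \<Rightarrow> real) \<Rightarrow> real" where "U1 L = (L {0,1} + L {2,3}) / 2"
definition U2 :: "(nat set \<Rightarrow> real) \<Rightarrow> real" where "U2 L = (L {0,2} + L {1,3}) / 2"
definition U3 :: "(nat set \<Rightarrow> real) \<Rightarrow> real" where "U3 L = (L {0,3} + L {1,2}) / 2"

lemma gd_gen:
  assumes "a < b" "c < d" "{..<4::nat} - {a,b} = {c,d}"
  shows "gen_dihedral L {a,b} = ext_angle (exp ((L {a,b} + L {c,d}) / 2)) (exp ((L {a,c} + L {b,d}) / 2))
           (exp ((L {a,d} + L {b,c}) / 2))"
proof -
  have "Min {a,b} = a" "Max {a,b} = b" "Min {c,d} = c" "Max {c,d} = d" using assms(1,2) by auto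
  then show ?thesis unfolding gen_dihedral_def Let_def assms(3) by simp
qed

lemma gd_vals:
  "gen_dihedral L {0,1} = th (U1 L) (U2 L) (U3 L)"
  "gen_dihedral L {2,3} = th (U1 L) (U2 L) (U3 L)"
  "gen_dihedral L {0,2} = th (U2 L) (U1 L) (U3 L)"
  "gen_dihedral L {1,3} = th (U2 L) (U1 L) (U3 L)"
  "gen_dihedral L {0,3} = th (U3 L) (U1 L) (U2 L)"
  "gen_dihedral L {1,2} = th (U3 L) (U1 L) (U2 L)"
proof -
  have c: "{..<4::nat} - {0,1} = {2,3}" "{..<4::nat} - {2,3} = {0,1}" "{..<4::nat} - {0,2} = {1,3}"
    "{..<4::nat} - {1,3} = {0,2}" "{..<4::nat} - {0,3} = {1,2}" "{..<4::nat} - {1,2} = {0,3}"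
    unfolding lessThan4 by auto
  have s: "{2,0::nat} = {0,2}" "{3,1::nat} = {1,3}" "{2,1::nat} = {1,2}" "{3,0::nat} = {0,3}" "{1,0::nat} = {0,1}"
    "{3,2::nat} = {2,3}" by auto
  have g1: "gen_dihedral L {0,1} = ext_angle (exp ((L {0,1} + L {2,3}) / 2)) (exp ((L {0,2} + L {1,3}) / 2))
           (exp ((L {0,3} + L {1,2}) / 2))" by (rule gd_gen[OF _ _ c(1)]) simp_all
  have g2: "gen_dihedral L {2,3} = ext_angle (exp ((L {2,3} + L {0,1}) / 2)) (exp ((L {2,0} + L {3,1}) / 2))
           (exp ((L {2,1} + L {3,0}) / 2))" by (rule gd_gen[OF _ _ c(2)]) simp_all
  have g3: "gen_dihedral L {0,2} = ext_angle (exp ((L {0,2} + L {1,3}) / 2)) (exp ((L {0,1} + L {2,3}) / 2))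
           (exp ((L {0,3} + L {2,1}) / 2))" by (rule gd_gen[OF _ _ c(3)]) simp_all
  have g4: "gen_dihedral L {1,3} = ext_angle (exp ((L {1,3} + L {0,2}) / 2)) (exp ((L {1,0} + L {3,2}) / 2))
           (exp ((L {1,2} + L {3,0}) / 2))" by (rule gd_gen[OF _ _ c(4)]) simp_all
  have g5: "gen_dihedral L {0,3} = ext_angle (exp ((L {0,3} + L {1,2}) / 2)) (exp ((L {0,1} + L {3,2}) / 2))
           (exp ((L {0,2} + L {3,1}) / 2))" by (rule gd_gen[OF _ _ c(5)]) simp_all
  have g6: "gen_dihedral L {1,2} = ext_angle (exp ((L {1,2} + L {0,3}) / 2)) (exp ((L {1,0} + L {2,3}) / 2))
           (exp ((L {1,3} + L {2,0}) / 2))" by (rule gd_gen[OF _ _ c(6)]) simp_all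
  show "gen_dihedral L {0,1} = th (U1 L) (U2 L) (U3 L)"
  "gen_dihedral L {2,3} = th (U1 L) (U2 L) (U3 L)"
  "gen_dihedral L {0,2} = th (U2 L) (U1 L) (U3 L)"
  "gen_dihedral L {1,3} = th (U2 L) (U1 L) (U3 L)"
  "gen_dihedral L {0,3} = th (U3 L) (U1 L) (U2 L)"
  "gen_dihedral L {1,2} = th (U3 L) (U1 L) (U2 L)"
  unfolding th_def U1_def U2_def U3_def g1 g2 g3 g4 g5 g6 s
  by (simp_all only: add.commute)
qed

lemma sum_pair: "a \<noteq> b \<Longrightarrow> (\<Sum>x\<in>{a,b}. f x) = f a + (f b :: real)" by simp

lemma ext_angle_scale:
  assumes "k > 0"
  shows "ext_angle (k*a) (k*b) (k*c) = ext_angle a b c"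
proof -
  have e1: "k*a \<ge> k*b + k*c \<longleftrightarrow> a \<ge> b + c" using assms
    by (metis distrib_left mult_le_cancel_left_pos)
  have e2: "k*b \<ge> k*a + k*c \<longleftrightarrow> b \<ge> a + c" using assms
    by (metis distrib_left mult_le_cancel_left_pos)
  have e3: "k*c \<ge> k*a + k*b \<longleftrightarrow> c \<ge> a + b" using assms
    by (metis distrib_left mult_le_cancel_left_pos)
  have e4: "((k*b)\<^sup>2 + (k*c)\<^sup>2 - (k*a)\<^sup>2) / (2 * (k*b) * (k*c)) = (b\<^sup>2 + c\<^sup>2 - a\<^sup>2) / (2 * b * c)"
  proof -
    have "((k*b)\<^sup>2 + (k*c)\<^sup>2 - (k*a)\<^sup>2) / (2 * (k*b) * (k*c)) = (k*k*(b\<^sup>2 + c\<^sup>2 - a\<^sup>2)) / (k*k*(2 * b * c))"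
      by (simp add: power2_eq_square algebra_simps)
    also have "\<dots> = (b\<^sup>2 + c\<^sup>2 - a\<^sup>2) / (2 * b * c)" using assms by (simp only: mult_divide_mult_cancel_left_if) simp
    finally show ?thesis .
  qed
  show ?thesis unfolding ext_angle_def e1 e2 e3 e4 ..
qed

lemma th_shift: "th (a + t) (b + t) (c + t) = th a b c"
  unfolding th_def exp_add using ext_angle_scale[of "exp t"] by (simp add: mult.commute)

lemma gd_shift:
  assumes "\<forall>s\<in>tet_edges. L' s = L s + (\<Sum>a\<in>s. W a)" "s \<in> tet_edges"
  shows "gen_dihedral L' s = gen_dihedral L s"
proof -
  have m: "{0,1} \<in> tet_edges" "{0,2} \<in> tet_edges" "{0,3} \<in> tet_edges" "{1,2} \<in> tet_edges"
    "{1,3} \<in> tet_edges" "{2,3} \<in> tet_edges" unfolding tet_edges_explicit by simp_all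
  define c where "c = (W 0 + W 1 + W 2 + W 3) / 2"
  have u: "U1 L' = U1 L + c" "U2 L' = U2 L + c" "U3 L' = U3 L + c"
    unfolding U1_def U2_def U3_def c_def using assms(1) m by (auto simp: field_simps)
  from assms(2) have "s = {0,1} \<or> s = {0,2} \<or> s = {0,3} \<or> s = {1,2} \<or> s = {1,3} \<or> s = {2,3}"
    unfolding tet_edges_explicit by (simp only: insert_iff empty_iff simp_thms)
  then show ?thesis by (elim disjE) (simp_all only: gd_vals u th_shift)
qed

lemma tet_angle_weighted:
  "(\<Sum>s\<in>tet_edges. gen_dihedral L s * (\<Sum>a\<in>s. W a)) = pi * (W 0 + W 1 + W 2 + W 3)"
proof -
  have as: "th (U1 L) (U2 L) (U3 L) + th (U2 L) (U1 L) (U3 L) + th (U3 L) (U1 L) (U2 L) = pi"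
    unfolding th_def by (rule angle_sum) auto
  have r: "t1*(w0+w1) + t2*(w0+w2) + t3*(w0+w3) + t3*(w1+w2) + t2*(w1+w3) + t1*(w2+w3)
     = (t1+t2+t3)*(w0+w1+w2+w3)" for t1 t2 t3 w0 w1 w2 w3 :: real by algebra
  have p: "(\<Sum>a\<in>{0,1::nat}. W a) = W 0 + W 1" "(\<Sum>a\<in>{0,2::nat}. W a) = W 0 + W 2"
    "(\<Sum>a\<in>{0,3::nat}. W a) = W 0 + W 3" "(\<Sum>a\<in>{1,2::nat}. W a) = W 1 + W 2"
    "(\<Sum>a\<in>{1,3::nat}. W a) = W 1 + W 3" "(\<Sum>a\<in>{2,3::nat}. W a) = W 2 + W 3" by simp_all
  show ?thesis unfolding sum_tet_edges gd_vals p r as ..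
qed

lemma tet_mono:
  "(\<Sum>s\<in>tet_edges. (gen_dihedral L s - gen_dihedral L' s) * (L s - L' s)) \<ge> 0"
proof -
  have "(\<Sum>s\<in>tet_edges. (gen_dihedral L s - gen_dihedral L' s) * (L s - L' s)) =
     2 * ((th (U1 L) (U2 L) (U3 L) - th (U1 L') (U2 L') (U3 L'))*(U1 L - U1 L')
        + (th (U2 L) (U1 L) (U3 L) - th (U2 L') (U1 L') (U3 L'))*(U2 L - U2 L')
        + (th (U3 L) (U1 L) (U2 L) - th (U3 L') (U1 L') (U2 L'))*(U3 L - U3 L'))"
  proof -
    have r: "(t1 - s1)*(a01 - b01) + (t2 - s2)*(a02 - b02) + (t3 - s3)*(a03 - b03) + (t3 - s3)*(a12 - b12)
      + (t2 - s2)*(a13 - b13) + (t1 - s1)*(a23 - b23) =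
      2 * ((t1 - s1)*((a01 + a23)/2 - (b01 + b23)/2) + (t2 - s2)*((a02 + a13)/2 - (b02 + b13)/2)
         + (t3 - s3)*((a03 + a12)/2 - (b03 + b12)/2))" for t1 t2 t3 s1 s2 s3 a01 a02 a03 a12 a13 a23 b01 b02 b03 b12 b13 b23 :: real
      by (simp add: field_simps)
    show ?thesis unfolding sum_tet_edges gd_vals r unfolding U1_def U2_def U3_def ..
  qed
  then show ?thesis using tri_mono[of "U1 L" "U2 L" "U3 L" "U1 L'" "U2 L'" "U3 L'"] by simp
qed

lemma finite_tet_edges: "finite tet_edges"
  unfolding tet_edges_explicit by simp

lemma rtrancl_sym_image:
  assumes "(x, y) \<in> (R \<union> R\<inverse>)\<^sup>*"
  shows "(R \<union> R\<inverse>)\<^sup>* `` {x} = (R \<union> R\<inverse>)\<^sup>* `` {y}"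
proof -
  have "(y, x) \<in> ((R \<union> R\<inverse>)\<inverse>)\<^sup>*" using assms by (rule rtrancl_converseI)
  moreover have "(R \<union> R\<inverse>)\<inverse> = R \<union> R\<inverse>" by auto
  ultimately have yx: "(y, x) \<in> (R \<union> R\<inverse>)\<^sup>*" by simp
  show ?thesis using assms yx by (auto intro: rtrancl_trans)
qed

lemma vclass_glue:
  assumes "\<sigma> \<in> T" "i < 4" "a < 4" "a \<noteq> i"
  shows "vclass T P (ptet P \<sigma> i) (pmap P \<sigma> i a) = vclass T P \<sigma> a"
proof -
  have "((\<sigma>, a), (ptet P \<sigma> i, pmap P \<sigma> i a)) \<in> vgen T P"
    unfolding vgen_def using assms by blast
  then have "((\<sigma>, a), (ptet P \<sigma> i, pmap P \<sigma> i a)) \<in> vrel T P"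
    unfolding vrel_def by (intro r_into_rtrancl UnI1)
  then show ?thesis unfolding vclass_def vrel_def by (metis rtrancl_sym_image)
qed

definition einv :: "'t set \<Rightarrow> 't pairing \<Rightarrow> 't vweight \<Rightarrow> 't \<times> nat set \<Rightarrow> real" where
  "einv T P w p = (\<Sum>a\<in>snd p. w (vclass T P (fst p) a))"

lemma egen_inv:
  assumes cl: "closed_pseudo_3_manifold T P" and pq: "(p, q) \<in> egen T P"
  shows "einv T P w p = einv T P w q"
proof -
  obtain \<sigma> i a b where pq': "p = (\<sigma>, {a, b})" "q = (ptet P \<sigma> i, {pmap P \<sigma> i a, pmap P \<sigma> i b})"
    and c: "\<sigma> \<in> T" "i < 4" "a < 4" "b < 4" "a \<noteq> b" "a \<noteq> i" "b \<noteq> i"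
    using pq unfolding egen_def by blast
  have "bij_betw (pmap P \<sigma> i) ({..<4} - {i}) ({..<4} - {pface P \<sigma> i})"
    using cl c unfolding closed_pseudo_3_manifold_def by blast
  then have "inj_on (pmap P \<sigma> i) ({..<4} - {i})" by (rule bij_betw_imp_inj_on)
  then have ne: "pmap P \<sigma> i a \<noteq> pmap P \<sigma> i b" using c by (auto dest: inj_onD)
  show ?thesis unfolding pq' einv_def using ne c
    by (simp add: vclass_glue)
qed

lemma erel_inv:
  assumes cl: "closed_pseudo_3_manifold T P" and pq: "(p, q) \<in> erel T P"
  shows "einv T P w p = einv T P w q"
  using pq unfolding erel_def
proof (induction rule: rtrancl_induct)
  case base then show ?case by simp
next
  case (step y z)
  then show ?case using egen_inv[OF cl] by (metis UnE converseD)
qed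

lemma vact_eclass:
  assumes cl: "closed_pseudo_3_manifold T P"
  shows "vact T P w l (eclass T P \<sigma> s) = l (eclass T P \<sigma> s) + (\<Sum>a\<in>s. w (vclass T P \<sigma> a))"
proof -
  have mem: "(\<sigma>, s) \<in> eclass T P \<sigma> s" unfolding eclass_def erel_def by simp
  define x where "x = (SOME x. x \<in> eclass T P \<sigma> s)"
  have "x \<in> eclass T P \<sigma> s" unfolding x_def using mem by (rule someI)
  then have "((\<sigma>, s), x) \<in> erel T P" unfolding eclass_def by simp
  then have "einv T P w (\<sigma>, s) = einv T P w x" by (rule erel_inv[OF cl])
  then show ?thesis unfolding vact_def Let_def x_def[symmetric] einv_def by simp
qed

lemma Edges_image: "Edges T P = (\<lambda>p. eclass T P (fst p) (snd p)) ` (T \<times> tet_edges)"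
  unfolding Edges_def quotient_def eclass_def by auto

lemma finite_Edges: "finite T \<Longrightarrow> finite (Edges T P)"
  unfolding Edges_image using finite_tet_edges by simp

lemma regroup:
  assumes "finite T"
  shows "(\<Sum>e\<in>Edges T P. \<Sum>p\<in>{(\<sigma>, s). \<sigma> \<in> T \<and> s \<in> tet_edges \<and> eclass T P \<sigma> s = e}. F e p)
       = (\<Sum>p\<in>T \<times> tet_edges. F (eclass T P (fst p) (snd p)) p)"
proof -
  have fS: "finite (T \<times> tet_edges)" using assms finite_tet_edges by simp
  have g: "(\<lambda>p. eclass T P (fst p) (snd p)) ` (T \<times> tet_edges) \<subseteq> Edges T P" unfolding Edges_image by simp
  have "(\<Sum>p\<in>T \<times> tet_edges. F (eclass T P (fst p) (snd p)) p) =
    (\<Sum>e\<in>Edges T P. \<Sum>p\<in>{x. x \<in> T \<times> tet_edges \<and> eclass T P (fst x) (snd x) = e}. F (eclass T P (fst p) (snd p)) p)"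
    by (rule sum.group[OF fS finite_Edges[OF assms] g, symmetric])
  also have "\<dots> = (\<Sum>e\<in>Edges T P. \<Sum>p\<in>{(\<sigma>, s). \<sigma> \<in> T \<and> s \<in> tet_edges \<and> eclass T P \<sigma> s = e}. F e p)"
  proof (rule sum.cong[OF refl])
    fix e
    have "{x. x \<in> T \<times> tet_edges \<and> eclass T P (fst x) (snd x) = e} = {(\<sigma>, s). \<sigma> \<in> T \<and> s \<in> tet_edges \<and> eclass T P \<sigma> s = e}"
      by auto
    then show "(\<Sum>p\<in>{x. x \<in> T \<times> tet_edges \<and> eclass T P (fst x) (snd x) = e}. F (eclass T P (fst p) (snd p)) p) =
      (\<Sum>p\<in>{(\<sigma>, s). \<sigma> \<in> T \<and> s \<in> tet_edges \<and> eclass T P \<sigma> s = e}. F e p)"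
      by (intro sum.cong) auto
  qed
  finally show ?thesis by simp
qed

lemma curv_invariant:
  assumes cl: "closed_pseudo_3_manifold T P"
  shows "gen_curv T P (vact T P w l) e = gen_curv T P l e"
  unfolding gen_curv_def
proof (intro arg_cong[where f="\<lambda>x. 2 * pi - x"] sum.cong refl)
  fix p assume p: "p \<in> {(\<sigma>, s). \<sigma> \<in> T \<and> s \<in> tet_edges \<and> eclass T P \<sigma> s = e}"
  obtain \<sigma> s where ps: "p = (\<sigma>, s)" by fastforce
  have s: "s \<in> tet_edges" using p ps by simp
  have "gen_dihedral (tet_metric T P (vact T P w l) \<sigma>) s = gen_dihedral (tet_metric T P l \<sigma>) s"
    by (rule gd_shift[OF _ s, where W="\<lambda>a. w (vclass T P \<sigma> a)"])
       (simp add: tet_metric_def vact_eclass[OF cl])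
  then show "(case p of (\<sigma>, s) \<Rightarrow> gen_dihedral (tet_metric T P (vact T P w l) \<sigma>) s) =
         (case p of (\<sigma>, s) \<Rightarrow> gen_dihedral (tet_metric T P l \<sigma>) s)" unfolding ps by simp
qed

lemma curv_dot:
  assumes cl: "closed_pseudo_3_manifold T P"
  shows "(\<Sum>e\<in>Edges T P. gen_curv T P l e * vact T P w (\<lambda>_. 0) e) =
     2 * pi * (\<Sum>e\<in>Edges T P. vact T P w (\<lambda>_. 0) e)
     - pi * (\<Sum>\<sigma>\<in>T. w (vclass T P \<sigma> 0) + w (vclass T P \<sigma> 1) + w (vclass T P \<sigma> 2) + w (vclass T P \<sigma> 3))"
proof -
  have fT: "finite T" using cl unfolding closed_pseudo_3_manifold_def by simp
  define c where "c = vact T P w (\<lambda>_. 0)"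
  define fib where "fib e = {(\<sigma>, s). \<sigma> \<in> T \<and> s \<in> tet_edges \<and> eclass T P \<sigma> s = e}" for e
  have "(\<Sum>e\<in>Edges T P. gen_curv T P l e * c e) =
     (\<Sum>e\<in>Edges T P. 2 * pi * c e - (\<Sum>p\<in>fib e. gen_dihedral (tet_metric T P l (fst p)) (snd p) * c e))"
    unfolding gen_curv_def fib_def case_prod_unfold by (simp add: left_diff_distrib sum_distrib_right)
  also have "\<dots> = 2 * pi * (\<Sum>e\<in>Edges T P. c e) -
     (\<Sum>e\<in>Edges T P. \<Sum>p\<in>fib e. gen_dihedral (tet_metric T P l (fst p)) (snd p) * c e)"
    by (simp add: sum_subtractf sum_distrib_left)
  also have "(\<Sum>e\<in>Edges T P. \<Sum>p\<in>fib e. gen_dihedral (tet_metric T P l (fst p)) (snd p) * c e)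
     = (\<Sum>p\<in>T \<times> tet_edges. gen_dihedral (tet_metric T P l (fst p)) (snd p) * c (eclass T P (fst p) (snd p)))"
    unfolding fib_def by (rule regroup[OF fT])
  also have "\<dots> = (\<Sum>p\<in>T \<times> tet_edges. gen_dihedral (tet_metric T P l (fst p)) (snd p) *
        (\<Sum>a\<in>snd p. w (vclass T P (fst p) a)))"
    unfolding c_def vact_eclass[OF cl] by simp
  also have "\<dots> = (\<Sum>\<sigma>\<in>T. \<Sum>s\<in>tet_edges. gen_dihedral (tet_metric T P l \<sigma>) s * (\<Sum>a\<in>s. w (vclass T P \<sigma> a)))"
    by (simp add: sum.cartesian_product case_prod_unfold)
  also have "\<dots> = (\<Sum>\<sigma>\<in>T. pi * (w (vclass T P \<sigma> 0) + w (vclass T P \<sigma> 1) + w (vclass T P \<sigma> 2) + w (vclass T P \<sigma> 3)))"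
    by (simp only: tet_angle_weighted)
  also have "\<dots> = pi * (\<Sum>\<sigma>\<in>T. w (vclass T P \<sigma> 0) + w (vclass T P \<sigma> 1) + w (vclass T P \<sigma> 2) + w (vclass T P \<sigma> 3))"
    by (simp add: sum_distrib_left)
  finally show ?thesis unfolding c_def .
qed

lemma sum_diff_mult: "(sum f A - sum g A) * (k::real) = (\<Sum>p\<in>A. (f p - g p) * k)"
  by (simp add: sum_subtractf[symmetric] sum_distrib_right[symmetric])

lemma curv_mono:
  assumes cl: "closed_pseudo_3_manifold T P"
  shows "(\<Sum>e\<in>Edges T P. (gen_curv T P x e - gen_curv T P y e) * (x e - y e)) \<le> 0"
proof -
  have fT: "finite T" using cl unfolding closed_pseudo_3_manifold_def by simp
  define fib where "fib e = {(\<sigma>, s). \<sigma> \<in> T \<and> s \<in> tet_edges \<and> eclass T P \<sigma> s = e}" for e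
  define D where "D p = gen_dihedral (tet_metric T P y (fst p)) (snd p) - gen_dihedral (tet_metric T P x (fst p)) (snd p)" for p
  have "(\<Sum>e\<in>Edges T P. (gen_curv T P x e - gen_curv T P y e) * (x e - y e)) =
     (\<Sum>e\<in>Edges T P. \<Sum>p\<in>fib e. D p * (x e - y e))"
    unfolding gen_curv_def fib_def case_prod_unfold D_def by (simp add: sum_diff_mult)
  also have "\<dots> = (\<Sum>p\<in>T \<times> tet_edges. D p * (x (eclass T P (fst p) (snd p)) - y (eclass T P (fst p) (snd p))))"
    unfolding fib_def by (rule regroup[OF fT])
  also have "\<dots> = (\<Sum>\<sigma>\<in>T. \<Sum>s\<in>tet_edges. (gen_dihedral (tet_metric T P y \<sigma>) s - gen_dihedral (tet_metric T P x \<sigma>) s)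
        * (tet_metric T P x \<sigma> s - tet_metric T P y \<sigma> s))"
    unfolding D_def tet_metric_def by (simp add: sum.cartesian_product case_prod_unfold)
  also have "\<dots> = - (\<Sum>\<sigma>\<in>T. \<Sum>s\<in>tet_edges. (gen_dihedral (tet_metric T P x \<sigma>) s - gen_dihedral (tet_metric T P y \<sigma>) s)
        * (tet_metric T P x \<sigma> s - tet_metric T P y \<sigma> s))"
    by (simp add: sum_negf[symmetric] algebra_simps)
  also have "\<dots> \<le> 0"
    using tet_mono by (simp add: sum_nonneg)
  finally show ?thesis .
qed

lemma vact_split: "vact T P w l e = l e + vact T P w (\<lambda>_. 0) e"
  unfolding vact_def by simp

lemma decreasing_from_deriv:
  fixes D D' :: "real \<Rightarrow> real"
  assumes "\<And>s. s \<ge> 0 \<Longrightarrow> (D has_real_derivative D' s) (at s within {0..})"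
    and "\<And>s. s \<ge> 0 \<Longrightarrow> D' s \<le> 0" and "t \<ge> 0"
  shows "D t \<le> D 0"
proof -
  have "\<exists>x\<in>{0..t}. D t - D 0 = (\<lambda>h. D' x * h) (t - 0)"
  proof (rule mvt_very_simple)
    fix x assume "0 \<le> x" "x \<le> t"
    then have "(D has_real_derivative D' x) (at x within {0..t})"
      using assms(1)[of x] by (rule_tac DERIV_subset) auto
    then show "(D has_derivative (\<lambda>h. D' x * h)) (at x within {0..t})"
      by (simp add: has_field_derivative_def)
  qed (use assms in auto)
  then obtain x where "x \<in> {0..t}" "D t - D 0 = (t - 0) * D' x" by (auto simp: mult.commute)
  moreover have "(t - 0) * D' x \<le> 0" using assms(2,3) \<open>x \<in> {0..t}\<close> by (simp add: mult_nonneg_nonpos)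
  ultimately show ?thesis by simp
qed

theorem mainTheorem9:
  fixes T :: "'t set" and P :: "'t pairing"
    and l0 l0T :: "'t emetric" and w :: "'t vweight"
  assumes "closed_pseudo_3_manifold T P"
    and "\<exists>l. zero_curvature T P l"
    and "in_quot_space T P l0T"
    and "\<forall>e\<in>Edges T P. l0 e = vact T P w l0T e"
  shows "\<forall>l lT. ext_ricci_flow_solution T P l l0 \<and> ext_ricci_flow_solution T P lT l0T \<longrightarrow>
           (\<forall>t\<ge>0. (\<forall>e\<in>Edges T P. l t e = vact T P w (lT t) e) \<and> in_quot_space T P (lT t))"
proof (rule allI, rule allI, rule impI)
  fix l lT assume sol: "ext_ricci_flow_solution T P l l0 \<and> ext_ricci_flow_solution T P lT l0T"
  note cl = assms(1)
  have fT: "finite T" using cl unfolding closed_pseudo_3_manifold_def by simp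
  have fE: "finite (Edges T P)" using finite_Edges[OF fT] .
  have l0e: "\<And>e. e \<in> Edges T P \<Longrightarrow> l 0 e = l0 e" using sol unfolding ext_ricci_flow_solution_def by blast
  have lT0e: "\<And>e. e \<in> Edges T P \<Longrightarrow> lT 0 e = l0T e" using sol unfolding ext_ricci_flow_solution_def by blast
  have ld: "\<And>e t. e \<in> Edges T P \<Longrightarrow> t \<ge> 0 \<Longrightarrow>
      ((\<lambda>s. l s e) has_real_derivative gen_curv T P (l t) e) (at t within {0..})"
    using sol unfolding ext_ricci_flow_solution_def by blast
  have lTd: "\<And>e t. e \<in> Edges T P \<Longrightarrow> t \<ge> 0 \<Longrightarrow>
      ((\<lambda>s. lT s e) has_real_derivative gen_curv T P (lT t) e) (at t within {0..})"
    using sol unfolding ext_ricci_flow_solution_def by blast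
  obtain lz where lz: "zero_curvature T P lz" using assms(2) by blast
  have dot0: "(\<Sum>e\<in>Edges T P. gen_curv T P l' e * vact T P w' (\<lambda>_. 0) e) = 0" for l' w'
  proof -
    have "(\<Sum>e\<in>Edges T P. gen_curv T P l' e * vact T P w' (\<lambda>_. 0) e) =
       (\<Sum>e\<in>Edges T P. gen_curv T P lz e * vact T P w' (\<lambda>_. 0) e)"
      unfolding curv_dot[OF cl] ..
    also have "\<dots> = 0" using lz unfolding zero_curvature_def by simp
    finally show ?thesis .
  qed
  show "\<forall>t\<ge>0. (\<forall>e\<in>Edges T P. l t e = vact T P w (lT t) e) \<and> in_quot_space T P (lT t)"
  proof (intro allI impI conjI)
    fix t :: real assume t: "t \<ge> 0"
    show "in_quot_space T P (lT t)"
      unfolding in_quot_space_def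
    proof
      fix w' :: "'t vweight"
      define h where "h s = (\<Sum>e\<in>Edges T P. lT s e * vact T P w' (\<lambda>_. 0) e)" for s
      have "(h has_real_derivative 0) (at s within {0..})" if "s \<in> {0..}" for s
      proof -
        have "(h has_real_derivative (\<Sum>e\<in>Edges T P. gen_curv T P (lT s) e * vact T P w' (\<lambda>_. 0) e)) (at s within {0..})"
          unfolding h_def using that by (intro DERIV_sum DERIV_cmult_right lTd) auto
        then show ?thesis unfolding dot0 .
      qed
      then obtain c where c: "\<forall>x\<in>{0..}. h x = c"
        using has_field_derivative_zero_constant[of "{0..}" h] by (auto simp: convex_real_interval)
      have "h 0 = (\<Sum>e\<in>Edges T P. l0T e * vact T P w' (\<lambda>_. 0) e)"
        unfolding h_def by (intro sum.cong) (auto simp: lT0e)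
      also have "\<dots> = 0" using assms(3) unfolding in_quot_space_def by blast
      finally have "h t = 0" using c t by force
      then show "(\<Sum>e\<in>Edges T P. lT t e * vact T P w' (\<lambda>_. 0) e) = 0" unfolding h_def .
    qed
    define m where "m s = vact T P w (lT s)" for s
    have md: "((\<lambda>s. m s e) has_real_derivative gen_curv T P (m t') e) (at t' within {0..})"
      if "e \<in> Edges T P" "t' \<ge> 0" for e t'
    proof -
      have "((\<lambda>s. lT s e + vact T P w (\<lambda>_. 0) e) has_real_derivative gen_curv T P (lT t') e + 0) (at t' within {0..})"
        by (intro DERIV_add lTd that DERIV_const)
      then show ?thesis unfolding m_def curv_invariant[OF cl] by (subst vact_split) simp
    qed
    define D where "D s = (\<Sum>e\<in>Edges T P. (l s e - m s e)^2)" for s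
    define D' where "D' s = (\<Sum>e\<in>Edges T P. 2 * ((gen_curv T P (l s) e - gen_curv T P (m s) e) * (l s e - m s e)))" for s
    have Dd: "(D has_real_derivative D' s) (at s within {0..})" if "s \<ge> 0" for s
      unfolding D_def D'_def
    proof (rule DERIV_sum)
      fix e assume e: "e \<in> Edges T P"
      show "((\<lambda>x. (l x e - m x e)^2) has_real_derivative 2 * ((gen_curv T P (l s) e - gen_curv T P (m s) e) * (l s e - m s e))) (at s within {0..})"
        using DERIV_power[OF DERIV_diff[OF ld[OF e that] md[OF e that]], of 2] by simp
    qed
    have D'le: "D' s \<le> 0" if "s \<ge> 0" for s
    proof -
      have "D' s = 2 * (\<Sum>e\<in>Edges T P. (gen_curv T P (l s) e - gen_curv T P (m s) e) * (l s e - m s e))"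
        unfolding D'_def sum_distrib_left by (intro sum.cong) (auto simp: ac_simps)
      then show ?thesis using curv_mono[OF cl, of "l s" "m s"] by simp
    qed
    have D0: "D 0 = 0"
    proof -
      have "l 0 e - m 0 e = 0" if "e \<in> Edges T P" for e
      proof -
        have "l 0 e = l0T e + vact T P w (\<lambda>_. 0) e" using that assms(4) l0e vact_split[of T P w l0T e] by simp
        moreover have "m 0 e = l0T e + vact T P w (\<lambda>_. 0) e" unfolding m_def using vact_split[of T P w "lT 0" e] lT0e[OF that] by simp
        ultimately show ?thesis by simp
      qed
      then show ?thesis unfolding D_def by simp
    qed
    have "D t \<le> 0" using decreasing_from_deriv[OF Dd D'le t] D0 by simp
    moreover have "D t \<ge> 0" unfolding D_def by (simp add: sum_nonneg)
    ultimately have "D t = 0" by simp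
    moreover have "\<forall>e\<in>Edges T P. (l t e - m t e)^2 \<ge> 0" by simp
    ultimately have "\<forall>e\<in>Edges T P. (l t e - m t e)^2 = 0" unfolding D_def
      using sum_nonneg_eq_0_iff[OF fE, of "\<lambda>e. (l t e - m t e)^2"] by blast
    then show "\<forall>e\<in>Edges T P. l t e = vact T P w (lT t) e" unfolding m_def by simp
  qed
qed

end
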